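(* For $\mathcal{E}\in(0,1)$ let $\ell=\pi/T_0$ and $U(z)=u_0(z/\ell)$, so that $U$ is odd, $2\pi$-periodic, $U'(0)>0$, and $\ell^2U''+U-U^3=0$, $\ell^2(U')^2=\frac12[(1-U^2)^2-\mathcal{E}^2]$. Let $a=\frac1\pi\int_0^{2\pi}U(z)\sin z\,dz$. Then, as $\mathcal{E}\to1$, the map $\mathcal{E}\mapsto(\ell,U)\in\mathbb{R}\times H^2_{\rm per}(0,2\pi)$ is uniquely parametrized by the small parameter $a>0$, and $$\mathcal{E}=1-a^2+\mathcal{O}(a^4),\qquad \ell^2=1-\tfrac34a^2+\mathcal{O}(a^4),\qquad U=a\sin(\cdot)+\mathcal{O}_{H^2_{\rm per}(0,2\pi)}(a^3).$$
   Context: For $\mathcal{E}\in(0,1)$, $u_0(x)=\sqrt{1-\mathcal{E}}\,\mathrm{sn}\big(x\sqrt{(1+\mathcal{E})/2},\,k\big)$ with $k=\sqrt{(1-\mathcal{E})/(1+\mathcal{E})}$ (Jacobi elliptic function of modulus $k$); it is odd with $u_0'(0)>0$, satisfies $u_0''+u_0-u_0^3=0$, $(u_0')^2=\frac12[(1-u_0^2)^2-\mathcal{E}^2]$, and has minimal period $2T_0=4\sqrt{2/(1+\mathcal{E})}\,K(k)$, $K$ the complete elliptic integral of the first kind. *)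

theory Defs
  imports "HOL-Analysis.Analysis"
begin

definition ellF :: "real \<Rightarrow> real \<Rightarrow> real" where
  "ellF phi k = (if 0 \<le> phi
      then integral {0..phi} (\<lambda>t. 1 / sqrt (1 - k\<^sup>2 * (sin t)\<^sup>2))
      else - integral {phi..0} (\<lambda>t. 1 / sqrt (1 - k\<^sup>2 * (sin t)\<^sup>2)))"

definition ellK :: "real \<Rightarrow> real" where
  "ellK k = ellF (pi / 2) k"

definition jam :: "real \<Rightarrow> real \<Rightarrow> real" where
  "jam x k = (THE phi. ellF phi k = x)"

definition jsn :: "real \<Rightarrow> real \<Rightarrow> real" where
  "jsn x k = sin (jam x k)"

definition modk :: "real \<Rightarrow> real" where
  "modk E = sqrt ((1 - E) / (1 + E))"

definition u0 :: "real \<Rightarrow> real \<Rightarrow> real" where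
  "u0 E x = sqrt (1 - E) * jsn (x * sqrt ((1 + E) / 2)) (modk E)"

text \<open>Half period T_0 (minimal period is 2 T_0).\<close>
definition T0 :: "real \<Rightarrow> real" where
  "T0 E = 2 * sqrt (2 / (1 + E)) * ellK (modk E)"

definition ell :: "real \<Rightarrow> real" where
  "ell E = pi / T0 E"

definition UU :: "real \<Rightarrow> real \<Rightarrow> real" where
  "UU E z = u0 E (z / ell E)"

definition amp :: "real \<Rightarrow> real" where
  "amp E = (1 / pi) * integral {0..2*pi} (\<lambda>z. UU E z * sin z)"

definition H2norm :: "(real \<Rightarrow> real) \<Rightarrow> real" where
  "H2norm f = sqrt (integral {0..2*pi}
      (\<lambda>z. (f z)\<^sup>2 + (deriv f z)\<^sup>2 + (deriv (deriv f) z)\<^sup>2))"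

end

theory Submission
  imports Defs
begin

lemma sq_half_bound: assumes "0 \<le> x" "x \<le> 1/2" shows "sqrt (1 - x) \<ge> 7/10"
proof -
  have "(7/10::real) = sqrt ((7/10)^2)" by simp
  also have "\<dots> \<le> sqrt (1-x)" using assms by (intro real_sqrt_le_mono) (simp add: power2_eq_square)
  finally show ?thesis .
qed

lemma isq_a: assumes "0 \<le> x" "x \<le> 1/2"
  shows "1 \<le> 1 / sqrt (1 - x)" "1 / sqrt (1 - x) \<le> 1 + x"
    "0 \<le> 1 / sqrt (1 - x) - 1 - x/2" "1 / sqrt (1 - x) - 1 - x/2 \<le> 3 * x^2"
    "1 - x \<le> sqrt (1 - x)" "sqrt (1 - x) \<le> 1"
proof -
  define s where "s = sqrt (1 - x)"
  have s7: "s \<ge> 7/10" using sq_half_bound assms s_def by auto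
  have s1: "s \<le> 1" using assms s_def by simp
  have ss: "s * s = 1 - x" using assms s_def by (simp add: real_sqrt_mult_self)
  have x: "x = 1 - s * s" using ss by simp
  have "s * s \<le> s * 1" using s7 s1 by (intro mult_left_mono) auto
  then show "1 - x \<le> sqrt (1 - x)" using ss s_def by simp
  show "sqrt (1 - x) \<le> 1" using s1 s_def by simp
  show "1 \<le> 1 / sqrt (1 - x)" using s1 s7 unfolding s_def[symmetric] by simp
  have "s * (2 - s * s) - 1 = (1 - s) * (s * s + s - 1)" by (simp add: algebra_simps)
  also have "\<dots> \<ge> 0"
  proof -
    have p: "s * s \<ge> (7/10) * (7/10)" using s7 by (intro mult_mono) auto
    show ?thesis using s1 s7 p by (intro mult_nonneg_nonneg) auto
  qed
  finally have "1 \<le> s * (1 + (1 - s * s))" by simp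
  then have "1 / s \<le> 1 + (1 - s * s)" using s7 by (simp add: divide_le_eq mult.commute)
  then have "1 / s \<le> 1 + x" using x by simp
  then show "1 / sqrt (1 - x) \<le> 1 + x" by (simp add: s_def)
  have e0: "2 * s * (1/s - 1 - (1 - s * s)/2) = (s-1) * (s-1) * (s+2)" using s7 by (simp add: algebra_simps, simp add: field_simps)
  have e: "1/s - 1 - (1 - s * s)/2 = (s-1) * (s-1) * (s+2)/(2 * s)" using s7 e0
    by (simp add: eq_divide_eq mult.commute)
  have "0 \<le> (s-1) * (s-1) * (s+2)/(2 * s)" using s7 by simp
  then have "0 \<le> 1/s - 1 - x/2" using x e by simp
  then show "0 \<le> 1 / sqrt (1 - x) - 1 - x/2" by (simp add: s_def)
  have "(1+s) * (1+s) \<ge> 1" using s7 by (simp add: algebra_simps)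
  then have "6 * s * ((1+s) * (1+s)) \<ge> 6 * s * 1" using s7 by (intro mult_left_mono) auto
  then have h: "(s+2) \<le> 6 * s * ((1+s) * (1+s))" using s7 s1 by linarith
  have "(s-1) * (s-1) * (s+2) \<le> (s-1) * (s-1) * (6 * s * ((1+s) * (1+s)))"
    by (rule mult_left_mono[OF h]) simp
  also have "\<dots> = 2 * s * (3 * ((1 - s * s) * (1 - s * s)))" by (simp add: algebra_simps)
  finally have "(s-1) * (s-1) * (s+2)/(2 * s) \<le> 3 * ((1 - s * s) * (1-s * s))"
    using s7 by (simp add: divide_le_eq mult.commute)
  then have "1/s - 1 - x/2 \<le> 3 * x^2" using x e by (simp add: power2_eq_square)
  then show "1 / sqrt (1 - x) - 1 - x/2 \<le> 3 * x^2" by (simp add: s_def)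
qed

lemma isq_lip_aux1: fixes s r :: real assumes "s \<ge> 7/10" "r \<ge> 7/10" shows "1/s - 1/r = (r - s)/(s * r)"
  using assms by (simp add: diff_frac_eq)
lemma isq_lip_aux2: fixes s r x y :: real assumes "s * s = 1 - x" "r * r = 1 - y" shows "(r - s) * (r + s) = x - y"
  using assms by (simp add: algebra_simps)
lemma isq_lip_aux3: fixes s r x y :: real assumes "s \<ge> 7/10" "r \<ge> 7/10" "(r - s) * (r + s) = x - y" shows "r - s = (x - y)/(r+s)"
  using assms by (simp add: eq_divide_eq)
lemma isq_lip_aux4: fixes D x y :: real assumes "D \<ge> 1/2" shows "\<bar>(x-y)/D\<bar> \<le> 2 * \<bar>x - y\<bar>"
proof -
  have "\<bar>(x-y)/D\<bar> = \<bar>x-y\<bar>/D" using assms by simp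
  also have "\<dots> \<le> \<bar>x-y\<bar>/(1/2)" using assms by (intro divide_left_mono) auto
  finally show ?thesis by simp
qed

lemma isq_lip: assumes "0 \<le> x" "x \<le> 1/2" "0 \<le> y" "y \<le> 1/2"
  shows "\<bar>1 / sqrt (1 - x) - 1 / sqrt (1 - y)\<bar> \<le> 2 * \<bar>x - y\<bar>"
proof -
  have s7: "sqrt (1-x) \<ge> 7/10" using sq_half_bound assms by auto
  have r7: "sqrt (1-y) \<ge> 7/10" using sq_half_bound assms by auto
  have ss: "sqrt (1-x) * sqrt (1-x) = 1 - x" using assms by simp
  have rr: "sqrt (1-y) * sqrt (1-y) = 1 - y" using assms by simp
  have e2: "sqrt (1-y) - sqrt (1-x) = (x-y)/(sqrt (1-y)+sqrt (1-x))"
    by (rule isq_lip_aux3[OF s7 r7 isq_lip_aux2[OF ss rr]])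
  have "1/sqrt (1-x) - 1/sqrt (1-y) = (sqrt (1-y) - sqrt (1-x))/(sqrt (1-x) * sqrt (1-y))"
    by (rule isq_lip_aux1[OF s7 r7])
  also have "\<dots> = ((x-y)/(sqrt (1-y)+sqrt (1-x)))/(sqrt (1-x) * sqrt (1-y))" by (simp only: e2)
  also have "\<dots> = (x-y)/((sqrt (1-y)+sqrt (1-x)) * (sqrt (1-x) * sqrt (1-y)))" by (simp only: divide_divide_eq_left)
  finally have eq: "1/sqrt (1-x) - 1/sqrt (1-y) = (x-y)/((sqrt (1-y)+sqrt (1-x)) * (sqrt (1-x) * sqrt (1-y)))" .
  have p: "sqrt (1-x) * sqrt (1-y) \<ge> (7/10) * (7/10)" using s7 r7 assms by (intro mult_mono) auto
  have "sqrt (1-y) + sqrt (1-x) \<ge> 14/10" using s7 r7 by simp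
  then have "(sqrt (1-y) + sqrt (1-x)) * (sqrt (1-x) * sqrt (1-y)) \<ge> (14/10) * ((7/10) * (7/10))"
    using p s7 r7 assms by (intro mult_mono) auto
  then have D: "(sqrt (1-y) + sqrt (1-x)) * (sqrt (1-x) * sqrt (1-y)) \<ge> 1/2" by simp
  show ?thesis unfolding eq by (rule isq_lip_aux4[OF D])
qed

definition fk :: "real \<Rightarrow> real \<Rightarrow> real" where
  "fk k = (\<lambda>t. 1 / sqrt (1 - k\<^sup>2 * (sin t)\<^sup>2))"

lemma sin2_le1: "(sin t)^2 \<le> (1::real)" by (metis abs_sin_le_one abs_square_le_1)

lemma ksin_bounds: fixes k t :: real assumes "k^2 \<le> 1/2" shows "0 \<le> k^2 * (sin t)^2" "k^2 * (sin t)^2 \<le> 1/2"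
    "k^2 * (sin t)^2 \<le> k^2"
proof -
  have "(sin t)^2 \<le> 1" by (rule sin2_le1)
  then show "k^2 * (sin t)^2 \<le> k^2" by (intro mult_right_le_one_le) auto
  then show "k^2 * (sin t)^2 \<le> 1/2" using assms by linarith
qed simp

lemma fk_bounds: fixes k t :: real assumes "k^2 \<le> 1/2"
  shows "1 \<le> fk k t" "\<bar>fk k t - 1\<bar> \<le> k^2" "fk k t \<le> 2"
    "\<bar>fk k t - 1 - k^2 * (sin t)^2 / 2\<bar> \<le> 3 * k^4"
proof -
  note b = ksin_bounds[OF assms, of t]
  note i = isq_a[OF b(1) b(2)]
  show "1 \<le> fk k t" using i by (simp add: fk_def)
  show "\<bar>fk k t - 1\<bar> \<le> k^2" using i b by (simp add: fk_def)
  show "fk k t \<le> 2" using i b assms by (simp add: fk_def)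
  have "3 * (k^2 * (sin t)^2)^2 \<le> 3 * (k^2)^2" using b by (intro mult_left_mono power_mono) auto
  then show "\<bar>fk k t - 1 - k^2 * (sin t)^2 / 2\<bar> \<le> 3 * k^4" using i by (simp add: fk_def power_mult_distrib)
qed

lemma fk_lip: fixes k1 k2 t :: real assumes "k1^2 \<le> 1/2" "k2^2 \<le> 1/2"
  shows "\<bar>fk k1 t - fk k2 t\<bar> \<le> 2 * \<bar>k1^2 - k2^2\<bar>"
proof -
  note b1 = ksin_bounds[OF assms(1), of t] and b2 = ksin_bounds[OF assms(2), of t]
  have "\<bar>fk k1 t - fk k2 t\<bar> \<le> 2 * \<bar>k1^2 * (sin t)^2 - k2^2 * (sin t)^2\<bar>"
    unfolding fk_def using isq_lip[OF b1(1,2) b2(1,2)] by simp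
  also have "\<bar>k1^2 * (sin t)^2 - k2^2 * (sin t)^2\<bar> = \<bar>k1^2 - k2^2\<bar> * (sin t)^2"
    by (simp add: left_diff_distrib[symmetric] abs_mult)
  also have "\<dots> \<le> \<bar>k1^2 - k2^2\<bar>"
    by (intro mult_right_le_one_le) (auto simp: sin2_le1)
  finally show ?thesis by simp
qed

lemma fk_cont: fixes k :: real assumes "k^2 \<le> 1/2" shows "continuous_on S (fk k)"
proof -
  have h: "1 - k^2 * (sin t)^2 \<ge> 1/2" for t using ksin_bounds(2)[OF assms, of t] by linarith
  have "sqrt (1 - k^2 * (sin t)^2) \<noteq> 0" for t using h[of t] by simp
  then show ?thesis unfolding fk_def by (intro continuous_intros) auto
qed

lemma int_abs_bound:
  fixes f :: "real \<Rightarrow> real"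
  assumes "continuous_on {a..b} f" "a \<le> b" "\<And>x. x \<in> {a..b} \<Longrightarrow> \<bar>f x\<bar> \<le> M"
  shows "\<bar>integral {a..b} f\<bar> \<le> M * (b - a)"
proof -
  have "norm (integral {a..b} f) \<le> integral {a..b} (\<lambda>x. M)"
    using assms by (intro integral_norm_bound_integral integrable_continuous_real) auto
  then show ?thesis using assms by (simp add: mult.commute)
qed

lemma ellF_fk: "ellF phi k = (if 0 \<le> phi then integral {0..phi} (fk k) else - integral {phi..0} (fk k))"
  unfolding ellF_def fk_def by simp

lemma ellF_0[simp]: "ellF 0 k = 0"
  unfolding ellF_fk by simp

lemma ellF_diff: assumes "k^2 \<le> 1/2" "x \<le> y"
  shows "ellF y k - ellF x k = integral {x..y} (fk k)"
proof -
  have I: "\<And>a b. fk k integrable_on {a..b}" by (intro integrable_continuous_real fk_cont assms)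
  show ?thesis
  proof (cases "0 \<le> x")
    case True
    then show ?thesis using assms Henstock_Kurzweil_Integration.integral_combine[OF True assms(2) I] by (simp add: ellF_fk)
  next
    case False
    show ?thesis
    proof (cases "0 \<le> y")
      case True
      then show ?thesis using False Henstock_Kurzweil_Integration.integral_combine[of x 0 y, OF _ True I] by (simp add: ellF_fk)
    next
      case F2: False
      then show ?thesis using False assms Henstock_Kurzweil_Integration.integral_combine[of x y 0, OF assms(2) _ I] by (simp add: ellF_fk)
    qed
  qed
qed

lemma ellF_deriv: assumes "k^2 \<le> 1/2"
  shows "((\<lambda>p. ellF p k) has_real_derivative fk k p) (at p)"
proof -
  define a where "a = p - 1"
  have "((\<lambda>q. integral {a..q} (fk k)) has_real_derivative fk k p) (at p within {a..p+1})"
    using fk_cont[OF assms] by (intro integral_has_real_derivative) (auto simp: a_def)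
  then have "((\<lambda>q. integral {a..q} (fk k)) has_real_derivative fk k p) (at p)"
    using at_within_Icc_at[of a p "p+1"] by (simp add: a_def)
  then have d: "((\<lambda>q. ellF a k + integral {a..q} (fk k)) has_real_derivative fk k p) (at p)"
    using DERIV_add[OF DERIV_const[of "ellF a k"]] by fastforce
  show ?thesis
  proof (rule has_field_derivative_transform_within_open[OF d, of "{a<..}"])
    fix q assume "q \<in> {a<..}"
    then show "ellF a k + integral {a..q} (fk k) = ellF q k" using ellF_diff[OF assms, of a q] by simp
  qed (auto simp: a_def)
qed

lemma ellF_cont: assumes "k^2 \<le> 1/2" shows "continuous_on S (\<lambda>p. ellF p k)"
  using ellF_deriv[OF assms] by (meson DERIV_isCont continuous_at_imp_continuous_on)

lemma ellF_est: assumes "k^2 \<le> 1/2" "x \<le> y"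
  shows "y - x \<le> ellF y k - ellF x k"
    "\<bar>(ellF y k - ellF x k) - (y - x)\<bar> \<le> k^2 * (y - x)"
proof -
  have I: "fk k integrable_on {x..y}" by (intro integrable_continuous_real fk_cont assms)
  have "integral {x..y} (\<lambda>t. 1) \<le> integral {x..y} (fk k)"
    using I fk_bounds[OF assms(1)] by (intro integral_le) auto
  then show "y - x \<le> ellF y k - ellF x k" using ellF_diff[OF assms] assms by simp
  have "\<bar>integral {x..y} (\<lambda>t. fk k t - 1)\<bar> \<le> k^2 * (y - x)"
    using fk_bounds[OF assms(1)] assms by (intro int_abs_bound continuous_intros fk_cont) auto
  moreover have "integral {x..y} (\<lambda>t. fk k t - 1) = integral {x..y} (fk k) - integral {x..y} (\<lambda>t. 1)"
    by (rule integral_diff[OF I]) (intro integrable_continuous_real continuous_intros)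
  moreover have "integral {x..y} (\<lambda>t. 1::real) = y - x" using assms by simp
  ultimately show "\<bar>(ellF y k - ellF x k) - (y - x)\<bar> \<le> k^2 * (y - x)" using ellF_diff[OF assms] by simp
qed

lemma ellF_lip_k: assumes "k1^2 \<le> 1/2" "k2^2 \<le> 1/2" "x \<le> y"
  shows "\<bar>(ellF y k1 - ellF x k1) - (ellF y k2 - ellF x k2)\<bar> \<le> 2 * \<bar>k1^2 - k2^2\<bar> * (y - x)"
proof -
  have I1: "fk k1 integrable_on {x..y}" by (intro integrable_continuous_real fk_cont assms)
  have I2: "fk k2 integrable_on {x..y}" by (intro integrable_continuous_real fk_cont assms)
  have "\<bar>integral {x..y} (\<lambda>t. fk k1 t - fk k2 t)\<bar> \<le> 2 * \<bar>k1^2 - k2^2\<bar> * (y - x)"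
    using fk_lip[OF assms(1,2)] assms by (intro int_abs_bound continuous_intros fk_cont) auto
  then show ?thesis using ellF_diff[OF assms(1,3)] ellF_diff[OF assms(2,3)] I1 I2 by (simp add: integral_diff)
qed

lemma ellF_strict: assumes "k^2 \<le> 1/2" "x < y" shows "ellF x k < ellF y k"
  using ellF_est(1)[OF assms(1), of x y] assms by linarith

lemma ellF_absdiff: assumes "k^2 \<le> 1/2" shows "\<bar>x - y\<bar> \<le> \<bar>ellF x k - ellF y k\<bar>"
proof (cases "x \<le> y")
  case True then show ?thesis using ellF_est(1)[OF assms True] by linarith
next
  case False then show ?thesis using ellF_est(1)[OF assms, of y x] by linarith
qed

lemma ellF_near: assumes "k^2 \<le> 1/2" shows "\<bar>ellF p k - p\<bar> \<le> k^2 * \<bar>p\<bar>"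
proof (cases "0 \<le> p")
  case True then show ?thesis using ellF_est(2)[OF assms True] by simp
next
  case False then show ?thesis using ellF_est(2)[OF assms, of p 0] by simp
qed

lemma ellF_absge: assumes "k^2 \<le> 1/2" shows "\<bar>p\<bar> \<le> \<bar>ellF p k\<bar>"
  using ellF_absdiff[OF assms, of p 0] by simp

lemma ellF_k: assumes "k1^2 \<le> 1/2" "k2^2 \<le> 1/2"
  shows "\<bar>ellF p k1 - ellF p k2\<bar> \<le> 2 * \<bar>k1^2 - k2^2\<bar> * \<bar>p\<bar>"
proof (cases "0 \<le> p")
  case True then show ?thesis using ellF_lip_k[OF assms True] by simp
next
  case False then show ?thesis using ellF_lip_k[OF assms, of p 0] by simp
qed

lemma ellF_surj: assumes "k^2 \<le> 1/2" shows "\<exists>p. ellF p k = y"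
proof (cases "0 \<le> y")
  case True
  have "y \<le> ellF y k" using ellF_est(1)[OF assms True] by simp
  then obtain p where "0 \<le> p \<and> p \<le> y \<and> ellF p k = y"
    using IVT'[of "\<lambda>p. ellF p k" 0 y y] True ellF_cont[OF assms] by auto
  then show ?thesis by blast
next
  case False
  have "ellF y k \<le> y" using ellF_est(1)[OF assms, of y 0] False by simp
  then obtain p where "y \<le> p \<and> p \<le> 0 \<and> ellF p k = y"
    using IVT'[of "\<lambda>p. ellF p k" y y 0] False ellF_cont[OF assms] by auto
  then show ?thesis by blast
qed

lemma ellF_inj: assumes "k^2 \<le> 1/2" "ellF x k = ellF y k" shows "x = y"
  using ellF_absdiff[OF assms(1), of x y] assms(2) by simp

lemma jam_eq: assumes "k^2 \<le> 1/2" shows "ellF (jam y k) k = y"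
proof -
  obtain p where p: "ellF p k = y" using ellF_surj[OF assms] by blast
  have "ellF (THE p. ellF p k = y) k = y"
    by (rule theI[of "\<lambda>p. ellF p k = y" p]) (use p ellF_inj[OF assms] in auto)
  then show ?thesis by (simp add: jam_def)
qed

lemma jam_ellF: assumes "k^2 \<le> 1/2" shows "jam (ellF p k) k = p"
  using ellF_inj[OF assms jam_eq[OF assms, of "ellF p k"]] .

lemma jam_lip: assumes "k^2 \<le> 1/2" shows "\<bar>jam x k - jam y k\<bar> \<le> \<bar>x - y\<bar>"
  using ellF_absdiff[OF assms, of "jam x k" "jam y k"] jam_eq[OF assms] by simp

lemma jam_cont: assumes "k^2 \<le> 1/2" shows "continuous_on S (\<lambda>x. jam x k)"
proof -
  have "1-lipschitz_on S (\<lambda>x. jam x k)"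
    by (rule lipschitz_onI) (use jam_lip[OF assms] in \<open>auto simp: dist_real_def\<close>)
  then show ?thesis by (rule lipschitz_on_continuous_on)
qed

lemma jam_deriv: assumes "k^2 \<le> 1/2"
  shows "((\<lambda>x. jam x k) has_real_derivative sqrt (1 - k^2 * (sin (jam x k))^2)) (at x)"
proof -
  have pos: "fk k (jam x k) \<noteq> 0" using fk_bounds(1)[OF assms, of "jam x k"] by simp
  have "((\<lambda>x. jam x k) has_real_derivative inverse (fk k (jam x k))) (at x)"
  proof (rule DERIV_inverse_function[where f="\<lambda>p. ellF p k" and a="x-1" and b="x+1"])
    show "((\<lambda>p. ellF p k) has_real_derivative fk k (jam x k)) (at (jam x k))" by (rule ellF_deriv[OF assms])
    show "isCont (\<lambda>x. jam x k) x" using jam_cont[OF assms, of UNIV] by (simp add: continuous_on_eq_continuous_at)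
  qed (use pos jam_eq[OF assms] in auto)
  then show ?thesis by (simp add: fk_def)
qed

lemma sin2_integral: "((\<lambda>t. (sin t)^2) has_integral (b - sin b * cos b)/2 - (a - sin a * cos a)/2) {a..b}"
  if "a \<le> b" for a b :: real
proof (rule fundamental_theorem_of_calculus[OF that])
  fix x :: real
  have "((\<lambda>t. (t - sin t * cos t)/2) has_real_derivative (1 - (cos x * cos x - sin x * sin x))/2) (at x)"
    by (auto intro!: derivative_eq_intros)
  moreover have "(1 - (cos x * cos x - sin x * sin x))/2 = (sin x)^2"
    using sin_cos_squared_add[of x] by (simp add: power2_eq_square algebra_simps)
  ultimately show "((\<lambda>t. (t - sin t * cos t)/2) has_vector_derivative (sin x)^2) (at x within {a..b})"
    by (simp add: has_real_derivative_iff_has_vector_derivative[symmetric] has_field_derivative_at_within)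
qed

lemma int_sin2_half: "integral {0..pi/2} (\<lambda>t. (sin t)^2) = pi/4"
  using sin2_integral[of 0 "pi/2"] by (simp add: integral_unique)

lemma int_sin2_full: "integral {0..2*pi} (\<lambda>t. (sin t)^2) = pi"
  using sin2_integral[of 0 "2*pi"] by (simp add: integral_unique)

lemma ellK_fk: "ellK k = integral {0..pi/2} (fk k)"
  by (simp add: ellK_def ellF_fk)

lemma ellK_est: fixes k :: real assumes "k^2 \<le> 1/2"
  shows "\<bar>ellK k - pi/2\<bar> \<le> k^2 * (pi/2)" "pi/2 \<le> ellK k"
    "\<bar>ellK k - pi/2 - pi * k^2 / 8\<bar> \<le> 5 * k^4"
proof -
  have e: "ellK k = ellF (pi/2) k - ellF 0 k" by (simp add: ellK_def)
  show "\<bar>ellK k - pi/2\<bar> \<le> k^2 * (pi/2)" using ellF_est(2)[OF assms, of 0 "pi/2"] e by simp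
  show "pi/2 \<le> ellK k" using ellF_est(1)[OF assms, of 0 "pi/2"] e by simp
  have I: "fk k integrable_on {0..pi/2}" by (intro integrable_continuous_real fk_cont assms)
  have I2: "(\<lambda>t. 1 + k^2 / 2 * (sin t)^2) integrable_on {0..pi/2}"
    by (intro integrable_continuous_real continuous_intros) auto
  have cc: "continuous_on {0..pi/2} (\<lambda>t. fk k t - (1 + k^2 / 2 * (sin t)^2))"
    using assms by (intro continuous_intros fk_cont) auto
  have "\<bar>integral {0..pi/2} (\<lambda>t. fk k t - (1 + k^2 / 2 * (sin t)^2))\<bar> \<le> 3 * k^4 * (pi/2 - 0)"
    using fk_bounds(4)[OF assms] by (intro int_abs_bound[OF cc]) (simp_all add: algebra_simps)
  also have "\<dots> = k^4 * (3*pi/2)" by simp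
  also have "\<dots> \<le> k^4 * 5" by (rule mult_left_mono) (use pi_approx(2) in auto)
  also have "\<dots> = 5 * k^4" by simp
  finally have *: "\<bar>integral {0..pi/2} (\<lambda>t. fk k t - (1 + k^2 / 2 * (sin t)^2))\<bar> \<le> 5 * k^4" .
  have "integral {0..pi/2} (\<lambda>t. 1 + k^2 / 2 * (sin t)^2) = integral {0..pi/2} (\<lambda>t. 1) + integral {0..pi/2} (\<lambda>t. k^2 / 2 * (sin t)^2)"
    by (rule integral_add) (auto intro!: integrable_continuous_real continuous_intros)
  also have "\<dots> = pi/2 + k^2/2 * (pi/4)" by (simp add: int_sin2_half)
  finally have "integral {0..pi/2} (\<lambda>t. fk k t - (1 + k^2 / 2 * (sin t)^2)) = ellK k - (pi/2 + k^2/2 * (pi/4))"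
    using integral_diff[OF I I2] ellK_fk by simp
  then show "\<bar>ellK k - pi/2 - pi * k^2 / 8\<bar> \<le> 5 * k^4" using * by (simp add: algebra_simps)
qed

lemma ellK_lip: assumes "k1^2 \<le> 1/2" "k2^2 \<le> 1/2"
  shows "\<bar>ellK k1 - ellK k2\<bar> \<le> pi * \<bar>k1^2 - k2^2\<bar>"
  using ellF_k[OF assms, of "pi/2"] by (simp add: ellK_def mult.commute)

lemma sin_lip: "\<bar>sin w - sin z\<bar> \<le> \<bar>w - z\<bar>" for w z :: real
proof -
  have "\<bar>sin w - sin z\<bar> = 2 * \<bar>sin ((w - z) / 2)\<bar> * \<bar>cos ((w + z) / 2)\<bar>"
    by (simp add: sin_diff_sin abs_mult)
  also have "\<dots> \<le> 2 * \<bar>(w - z) / 2\<bar> * 1"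
    by (intro mult_mono abs_sin_x_le_abs_x) auto
  finally show ?thesis by simp
qed

lemma cos_lip: "\<bar>cos w - cos z\<bar> \<le> \<bar>w - z\<bar>" for w z :: real
proof -
  have "\<bar>cos w - cos z\<bar> = 2 * \<bar>sin ((w + z) / 2)\<bar> * \<bar>sin ((z - w) / 2)\<bar>"
    by (simp add: cos_diff_cos abs_mult)
  also have "\<dots> \<le> 2 * 1 * \<bar>(z - w) / 2\<bar>"
    by (intro mult_mono abs_sin_x_le_abs_x) auto
  finally show ?thesis by simp
qed

lemma abs_scale: fixes c x y :: real assumes "0 \<le> c" "x = c * y" shows "\<bar>x\<bar> = c * \<bar>y\<bar>"
  using assms by (simp add: abs_mult)

lemma abs_diff_mult_pos: fixes a b z :: real assumes "0 \<le> z" shows "\<bar>a * z - b * z\<bar> = \<bar>a - b\<bar> * z"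
proof -
  have "a * z - b * z = (a - b) * z" by (simp add: algebra_simps)
  then show ?thesis using assms by (simp add: abs_mult)
qed

definition cc :: "real \<Rightarrow> real" where "cc k = 2 * ellK k / pi"
definition PP :: "real \<Rightarrow> real \<Rightarrow> real" where "PP k z = jam (cc k * z) k"
definition gg :: "real \<Rightarrow> real \<Rightarrow> real" where "gg k t = sqrt (1 - k^2 * (sin t)^2)"

lemma cc_est: fixes k :: real assumes "k^2 \<le> 1/2"
  shows "1 \<le> cc k" "\<bar>cc k - 1\<bar> \<le> k^2" "cc k \<le> 2" "\<bar>cc k - 1 - k^2/4\<bar> \<le> 4 * k^4"
proof -
  note e = ellK_est[OF assms]
  have "cc k - 1 = (2/pi) * (ellK k - pi/2)" by (simp add: cc_def field_simps)
  then have c1: "\<bar>cc k - 1\<bar> = (2/pi) * \<bar>ellK k - pi/2\<bar>" by (intro abs_scale) auto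
  show "1 \<le> cc k" using e(2) by (simp add: cc_def field_simps)
  have "(2/pi) * \<bar>ellK k - pi/2\<bar> \<le> (2/pi) * (k^2 * (pi/2))" using e(1) by (intro mult_left_mono) auto
  then show c2: "\<bar>cc k - 1\<bar> \<le> k^2" using c1 by simp
  then show "cc k \<le> 2" using assms by simp
  have "cc k - 1 - k^2/4 = (2/pi) * (ellK k - pi/2 - pi * k^2 / 8)" by (simp add: cc_def field_simps)
  then have "\<bar>cc k - 1 - k^2/4\<bar> = (2/pi) * \<bar>ellK k - pi/2 - pi * k^2 / 8\<bar>" by (intro abs_scale) auto
  also have "\<dots> \<le> (2/pi) * (5 * k^4)" using e(3) by (intro mult_left_mono) auto
  also have "\<dots> = k^4 * (10/pi)" by simp
  also have "\<dots> \<le> k^4 * 4" using pi_approx(1) by (intro mult_left_mono) (auto simp: divide_le_eq)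
  finally show "\<bar>cc k - 1 - k^2/4\<bar> \<le> 4 * k^4" by simp
qed

lemma cc_lip: assumes "k1^2 \<le> 1/2" "k2^2 \<le> 1/2"
  shows "\<bar>cc k1 - cc k2\<bar> \<le> 2 * \<bar>k1^2 - k2^2\<bar>"
proof -
  have "cc k1 - cc k2 = (2/pi) * (ellK k1 - ellK k2)" by (simp add: cc_def field_simps)
  then have "\<bar>cc k1 - cc k2\<bar> = (2/pi) * \<bar>ellK k1 - ellK k2\<bar>" by (intro abs_scale) auto
  also have "\<dots> \<le> (2/pi) * (pi * \<bar>k1^2 - k2^2\<bar>)" using ellK_lip[OF assms] by (intro mult_left_mono) auto
  finally show ?thesis by simp
qed

lemma PP_eq: assumes "k^2 \<le> 1/2" shows "ellF (PP k z) k = cc k * z"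
  unfolding PP_def by (rule jam_eq[OF assms])

lemma PP_abs: assumes "k^2 \<le> 1/2" "z \<in> {0..2*pi}" shows "\<bar>PP k z\<bar> \<le> 4 * pi"
proof -
  have "\<bar>PP k z\<bar> \<le> \<bar>cc k * z\<bar>" using ellF_absge[OF assms(1), of "PP k z"] PP_eq[OF assms(1)] by simp
  also have "\<dots> = cc k * z" using assms cc_est(1)[OF assms(1)] by simp
  also have "\<dots> \<le> 2 * (2 * pi)" using assms cc_est(1,3)[OF assms(1)] by (intro mult_mono) auto
  finally show ?thesis by simp
qed

lemma PP_near: assumes "k^2 \<le> 1/2" "z \<in> {0..2*pi}" shows "\<bar>PP k z - z\<bar> \<le> 19 * k^2"
proof -
  have a: "\<bar>cc k * z - PP k z\<bar> \<le> k^2 * (4*pi)"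
    using ellF_near[OF assms(1), of "PP k z"] PP_eq[OF assms(1)] PP_abs[OF assms]
    by (smt (verit) mult_left_mono zero_le_power2)
  have "\<bar>cc k * z - z\<bar> = \<bar>cc k - 1\<bar> * z" using assms abs_diff_mult_pos[of z "cc k" 1] by simp
  also have "\<dots> \<le> k^2 * (2*pi)" using assms cc_est(2)[OF assms(1)] by (intro mult_mono) auto
  finally have b: "\<bar>cc k * z - z\<bar> \<le> k^2 * (2*pi)" .
  have "\<bar>PP k z - z\<bar> \<le> k^2 * (6 * pi)" using a b by (simp add: algebra_simps)
  also have "\<dots> \<le> k^2 * 19" using pi_approx(2) by (intro mult_left_mono) auto
  finally show ?thesis by simp
qed

lemma PP_lip: assumes "k1^2 \<le> 1/2" "k2^2 \<le> 1/2" "z \<in> {0..2*pi}"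
  shows "\<bar>PP k1 z - PP k2 z\<bar> \<le> 38 * \<bar>k1^2 - k2^2\<bar>"
proof -
  define D where "D = \<bar>k1^2 - k2^2\<bar>"
  have D0: "0 \<le> D" by (simp add: D_def)
  have e: "\<bar>ellF (PP k2 z) k1 - ellF (PP k2 z) k2\<bar> \<le> D * (8 * pi)"
  proof -
    have "\<bar>ellF (PP k2 z) k1 - ellF (PP k2 z) k2\<bar> \<le> 2 * D * \<bar>PP k2 z\<bar>"
      using ellF_k[OF assms(1,2)] D_def by simp
    also have "\<dots> \<le> 2 * D * (4 * pi)" using PP_abs[OF assms(2,3)] D0 by (intro mult_left_mono) auto
    finally show ?thesis by simp
  qed
  have c: "\<bar>cc k1 * z - cc k2 * z\<bar> \<le> D * (4 * pi)"
  proof -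
    have "\<bar>cc k1 * z - cc k2 * z\<bar> = \<bar>cc k1 - cc k2\<bar> * z" using assms abs_diff_mult_pos[of z "cc k1" "cc k2"] by simp
    also have "\<dots> \<le> (2 * D) * (2 * pi)" using cc_lip[OF assms(1,2)] assms(3) D_def by (intro mult_mono) auto
    finally show ?thesis by simp
  qed
  have "\<bar>PP k1 z - PP k2 z\<bar> \<le> \<bar>ellF (PP k1 z) k1 - ellF (PP k2 z) k1\<bar>" by (rule ellF_absdiff[OF assms(1)])
  also have "\<dots> \<le> D * (12 * pi)" using e c PP_eq[OF assms(1), of z] PP_eq[OF assms(2), of z] by (simp add: algebra_simps)
  also have "\<dots> \<le> D * 38" using pi_approx(2) D0 by (intro mult_left_mono) auto
  finally show ?thesis by (simp add: D_def)
qed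

lemma PP_cont: assumes "k^2 \<le> 1/2" shows "continuous_on S (PP k)"
proof -
  have "continuous_on S ((\<lambda>x. jam x k) \<circ> (\<lambda>z. cc k * z))"
    by (intro continuous_on_compose continuous_intros jam_cont[OF assms])
  then show ?thesis by (simp add: PP_def[abs_def] o_def)
qed

lemma gg_est: fixes k t :: real assumes "k^2 \<le> 1/2"
  shows "7/10 \<le> gg k t" "gg k t \<le> 1" "\<bar>gg k t - 1\<bar> \<le> k^2" "(gg k t)^2 = 1 - k^2 * (sin t)^2"
proof -
  note b = ksin_bounds[OF assms, of t]
  note i = isq_a[OF b(1) b(2)]
  show "7/10 \<le> gg k t" using sq_half_bound[OF b(1) b(2)] by (simp add: gg_def)
  show "gg k t \<le> 1" using i by (simp add: gg_def)
  show "\<bar>gg k t - 1\<bar> \<le> k^2" using i b by (simp add: gg_def)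
  show "(gg k t)^2 = 1 - k^2 * (sin t)^2" using b by (simp add: gg_def)
qed

lemma PP_deriv: assumes "k^2 \<le> 1/2"
  shows "(PP k has_real_derivative cc k * gg k (PP k z)) (at z)"
proof -
  have "((\<lambda>z. jam (cc k * z) k) has_real_derivative gg k (jam (cc k * z) k) * cc k) (at z)"
    using DERIV_chain2[OF jam_deriv[OF assms] DERIV_cmult_Id[of "cc k" z]] by (simp add: gg_def)
  then show ?thesis by (simp add: PP_def[abs_def] mult.commute)
qed

lemma gg_deriv: assumes "k^2 \<le> 1/2"
  shows "(gg k has_real_derivative - (k^2 * sin t * cos t) / gg k t) (at t)"
proof -
  have pos: "0 < 1 - k^2 * (sin t)^2" using ksin_bounds(2)[OF assms, of t] by simp
  have "((\<lambda>t. sqrt (1 - k^2 * (sin t)^2)) has_real_derivative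
      (inverse (sqrt (1 - k^2 * (sin t)^2)) / 2) * (- (k^2 * (2 * sin t * cos t)))) (at t)"
    by (rule DERIV_chain2[where f=sqrt and g="\<lambda>t. 1 - k^2 * (sin t)^2", OF DERIV_real_sqrt[OF pos]])
       (auto intro!: derivative_eq_intros simp: power2_eq_square)
  then show ?thesis by (simp add: gg_def[abs_def] field_simps)
qed

definition VV :: "real \<Rightarrow> real \<Rightarrow> real \<Rightarrow> real \<Rightarrow> real" where
  "VV A a k z = A * sin (PP k z) - a * sin z"
definition VV1 :: "real \<Rightarrow> real \<Rightarrow> real \<Rightarrow> real \<Rightarrow> real" where
  "VV1 A a k z = A * (cos (PP k z) * (cc k * gg k (PP k z))) - a * cos z"
definition VV2 :: "real \<Rightarrow> real \<Rightarrow> real \<Rightarrow> real \<Rightarrow> real" where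
  "VV2 A a k z = A * (- sin (PP k z) * (cc k * gg k (PP k z))^2
      - cos (PP k z) * ((cc k)^2 * k^2 * sin (PP k z) * cos (PP k z))) + a * sin z"

lemma gP_deriv: assumes "k^2 \<le> 1/2"
  shows "((\<lambda>z. gg k (PP k z)) has_real_derivative - (cc k * k^2 * sin (PP k z) * cos (PP k z))) (at z)"
proof -
  have "((\<lambda>z. gg k (PP k z)) has_real_derivative
      (- (k^2 * sin (PP k z) * cos (PP k z)) / gg k (PP k z)) * (cc k * gg k (PP k z))) (at z)"
    by (rule DERIV_chain2[OF gg_deriv[OF assms] PP_deriv[OF assms]])
  moreover have "gg k (PP k z) \<noteq> 0" using gg_est(1)[OF assms, of "PP k z"] by simp
  ultimately show ?thesis by (simp add: field_simps power2_eq_square)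
qed

lemma VV_deriv: assumes "k^2 \<le> 1/2"
  shows "(VV A a k has_real_derivative VV1 A a k z) (at z)"
  unfolding VV_def[abs_def] VV1_def
  by (auto intro!: derivative_eq_intros PP_deriv[OF assms] simp: algebra_simps)

lemma VV1_deriv: assumes "k^2 \<le> 1/2"
  shows "(VV1 A a k has_real_derivative VV2 A a k z) (at z)"
  unfolding VV1_def[abs_def] VV2_def
  by (auto intro!: derivative_eq_intros PP_deriv[OF assms] gP_deriv[OF assms] simp: algebra_simps power2_eq_square)

lemma VV_derivs: assumes "k^2 \<le> 1/2"
  shows "deriv (VV A a k) = VV1 A a k" "deriv (VV1 A a k) = VV2 A a k"
  using DERIV_imp_deriv[OF VV_deriv[OF assms]] DERIV_imp_deriv[OF VV1_deriv[OF assms]] by auto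

lemma VV2_cont: assumes "k^2 \<le> 1/2" shows "continuous_on S (VV2 A a k)"
proof -
  have g: "continuous_on UNIV (gg k)" unfolding gg_def[abs_def] using ksin_bounds(2)[OF assms]
    by (intro continuous_intros)
  then have "continuous_on S (\<lambda>z. gg k (PP k z))"
    using continuous_on_compose[OF PP_cont[OF assms, of S] continuous_on_subset[OF g subset_UNIV]] by (simp add: o_def)
  then show ?thesis unfolding VV2_def[abs_def]
    by (intro continuous_intros PP_cont[OF assms])
qed

lemma VV_cont: assumes "k^2 \<le> 1/2" shows "continuous_on S (VV A a k)" "continuous_on S (VV1 A a k)"
  using VV_deriv[OF assms] VV1_deriv[OF assms]
  by (meson DERIV_isCont continuous_at_imp_continuous_on)+

lemma VV_bound: assumes "k^2 \<le> 1/2" "0 \<le> A" "z \<in> {0..2*pi}"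
  shows "\<bar>VV A a k z\<bar> \<le> 19 * A * k^2 + \<bar>a - A\<bar>"
proof -
  have e: "VV A a k z = A * (sin (PP k z) - sin z) + (A - a) * sin z" by (simp add: VV_def algebra_simps)
  have "\<bar>A * (sin (PP k z) - sin z)\<bar> \<le> A * (19 * k^2)"
    using assms sin_lip[of "PP k z" z] PP_near[OF assms(1,3)] by (simp add: abs_mult mult_left_mono)
  moreover have "\<bar>(A - a) * sin z\<bar> \<le> \<bar>a - A\<bar>"
    by (simp add: abs_mult abs_minus_commute mult_right_le_one_le)
  moreover have "A * (19 * k^2) = 19 * A * k^2" by simp
  ultimately show ?thesis unfolding e using abs_triangle_ineq[of "A * (sin (PP k z) - sin z)" "(A - a) * sin z"] by linarith
qed

lemma VV1_bound: assumes "k^2 \<le> 1/2" "0 \<le> A" "z \<in> {0..2*pi}"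
  shows "\<bar>VV1 A a k z\<bar> \<le> 45 * A * k^2 + \<bar>a - A\<bar>"
proof -
  define c where "c = cc k"
  define G where "G = gg k (PP k z)"
  define co where "co = cos (PP k z)"
  have c1: "1 \<le> c" "c \<le> 2" "\<bar>c - 1\<bar> \<le> k^2" using cc_est[OF assms(1)] by (auto simp: c_def)
  have g1: "0 \<le> G" "G \<le> 1" "\<bar>G - 1\<bar> \<le> k^2" using gg_est[OF assms(1), of "PP k z"] unfolding G_def[symmetric] by auto
  have cl: "\<bar>co - cos z\<bar> \<le> 19 * k^2" using cos_lip[of "PP k z" z] PP_near[OF assms(1,3)] co_def by simp
  have e: "VV1 A a k z = A * ((co - cos z) * (c * G) + cos z * (c * (G - 1) + (c - 1))) + (A - a) * cos z"
    by (simp add: VV1_def c_def G_def co_def algebra_simps)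
  have t1: "\<bar>(co - cos z) * (c * G)\<bar> \<le> 19 * k^2 * 2"
  proof -
    have "c * G \<le> 2 * 1" by (rule mult_mono) (use c1 g1 in auto)
    moreover have "0 \<le> c * G" using c1 g1 by simp
    ultimately have "\<bar>c * G\<bar> \<le> 2 * 1" by simp
    then show ?thesis unfolding abs_mult using cl by (intro mult_mono) auto
  qed
  have t2: "\<bar>cos z * (c * (G - 1) + (c - 1))\<bar> \<le> 3 * k^2"
  proof -
    have "\<bar>c * (G - 1)\<bar> \<le> 2 * k^2" using c1 g1 by (simp add: abs_mult mult_mono)
    then have "\<bar>c * (G - 1) + (c - 1)\<bar> \<le> 3 * k^2" using c1 by linarith
    moreover have "\<bar>cos z\<bar> \<le> 1" by simp
    ultimately show ?thesis unfolding abs_mult using mult_mono[of "\<bar>cos z\<bar>" 1 "\<bar>c * (G - 1) + (c - 1)\<bar>" "3 * k^2"] by simp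
  qed
  have "\<bar>(co - cos z) * (c * G) + cos z * (c * (G - 1) + (c - 1))\<bar> \<le> 41 * k^2" using t1 t2 by linarith
  then have "\<bar>A * ((co - cos z) * (c * G) + cos z * (c * (G - 1) + (c - 1)))\<bar> \<le> A * (41 * k^2)"
    using assms(2) by (simp add: abs_mult mult_left_mono)
  moreover have "\<bar>(A - a) * cos z\<bar> \<le> \<bar>a - A\<bar>"
    by (simp add: abs_mult abs_minus_commute mult_right_le_one_le)
  moreover have "A * (41 * k^2) \<le> 45 * A * k^2" using assms(2) by simp
  ultimately show ?thesis unfolding e using abs_triangle_ineq[of "A * ((co - cos z) * (c * G) + cos z * (c * (G - 1) + (c - 1)))" "(A - a) * cos z"] by linarith
qed

lemma VV2_bound: assumes "k^2 \<le> 1/2" "0 \<le> A" "z \<in> {0..2*pi}"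
  shows "\<bar>VV2 A a k z\<bar> \<le> 30 * A * k^2 + \<bar>a - A\<bar>"
proof -
  define c where "c = cc k"
  define G where "G = gg k (PP k z)"
  define co where "co = cos (PP k z)"
  define s where "s = sin (PP k z)"
  have c1: "1 \<le> c" "c \<le> 2" "\<bar>c - 1\<bar> \<le> k^2" using cc_est[OF assms(1)] by (auto simp: c_def)
  have G2: "G^2 = 1 - k^2 * s^2" using gg_est(4)[OF assms(1)] by (simp add: G_def s_def)
  have sl: "\<bar>s - sin z\<bar> \<le> 19 * k^2" using sin_lip[of "PP k z" z] PP_near[OF assms(1,3)] s_def by simp
  have sc: "s^2 + co^2 = 1" by (simp add: s_def co_def)
  have s1: "\<bar>s\<bar> \<le> 1" by (simp add: s_def)
  have X: "- s * (c * G)^2 - co * (c^2 * k^2 * s * co) + sin z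
      = - ((c^2 - 1) * s) - (s - sin z) + c^2 * k^2 * s * (s^2 - co^2)"
  proof -
    have h: "(c * G)^2 = c^2 * (1 - k^2 * s^2)" using G2 by (simp add: power_mult_distrib)
    show ?thesis unfolding h by (simp add: algebra_simps power2_eq_square)
  qed
  have t1: "\<bar>(c^2 - 1) * s\<bar> \<le> 3 * k^2"
  proof -
    have "c^2 - 1 = (c - 1) * (c + 1)" by (simp add: power2_eq_square algebra_simps)
    then have "\<bar>c^2 - 1\<bar> = \<bar>c - 1\<bar> * \<bar>c + 1\<bar>" by (simp only: abs_mult)
    also have "\<bar>c + 1\<bar> = c + 1" using c1 by simp
    finally have "\<bar>c^2 - 1\<bar> = \<bar>c - 1\<bar> * (c + 1)" .
    also have "\<dots> \<le> k^2 * 3" using c1 by (intro mult_mono) auto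
    finally have "\<bar>c^2 - 1\<bar> \<le> 3 * k^2" by simp
    then show ?thesis using s1 unfolding abs_mult using mult_mono[of "\<bar>c^2 - 1\<bar>" "3 * k^2" "\<bar>s\<bar>" 1] by simp
  qed
  have t3: "\<bar>c^2 * k^2 * s * (s^2 - co^2)\<bar> \<le> 4 * k^2"
  proof -
    have q: "\<bar>s^2 - co^2\<bar> \<le> 1" using sc zero_le_power2[of s] zero_le_power2[of co] unfolding abs_le_iff by linarith
    have "c^2 \<le> 2^2" using c1 by (intro power_mono) auto
    then have "c^2 * k^2 \<le> 4 * k^2" by (intro mult_right_mono) auto
    moreover have "\<bar>s * (s^2 - co^2)\<bar> \<le> 1" using q s1 mult_mono[of "\<bar>s\<bar>" 1 "\<bar>s^2 - co^2\<bar>" 1] unfolding abs_mult by simp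
    ultimately have "c^2 * k^2 * \<bar>s * (s^2 - co^2)\<bar> \<le> 4 * k^2 * 1" using mult_mono[of "c^2 * k^2" "4 * k^2" "\<bar>s * (s^2 - co^2)\<bar>" 1] by simp
    then show ?thesis by (simp add: abs_mult mult.assoc)
  qed
  have "\<bar>- ((c^2 - 1) * s) - (s - sin z) + c^2 * k^2 * s * (s^2 - co^2)\<bar> \<le> 26 * k^2"
    using t1 sl t3 by linarith
  then have B: "\<bar>- s * (c * G)^2 - co * (c^2 * k^2 * s * co) + sin z\<bar> \<le> 26 * k^2" using X by simp
  have e: "VV2 A a k z = A * (- s * (c * G)^2 - co * (c^2 * k^2 * s * co) + sin z) + (a - A) * sin z"
    by (simp add: VV2_def c_def G_def co_def s_def algebra_simps)
  have "\<bar>A * (- s * (c * G)^2 - co * (c^2 * k^2 * s * co) + sin z)\<bar> \<le> A * (26 * k^2)"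
    using B assms(2) by (simp add: abs_mult mult_left_mono)
  moreover have "\<bar>(a - A) * sin z\<bar> \<le> \<bar>a - A\<bar>"
    by (simp add: abs_mult mult_right_le_one_le)
  moreover have "A * (26 * k^2) \<le> 30 * A * k^2" using assms(2) by simp
  ultimately show ?thesis unfolding e using abs_triangle_ineq[of "A * (- s * (c * G)^2 - co * (c^2 * k^2 * s * co) + sin z)" "(a - A) * sin z"] by linarith
qed

definition hh :: "real \<Rightarrow> real" where
  "hh k = integral {0..2*pi} (\<lambda>z. sin (PP k z) * sin z) / pi"

lemma sPs_cont: assumes "k^2 \<le> 1/2" shows "continuous_on S (\<lambda>z. sin (PP k z) * sin z)"
  by (intro continuous_intros PP_cont[OF assms])

lemma hh_est: assumes "k^2 \<le> 1/2" shows "\<bar>hh k - 1\<bar> \<le> 38 * k^2"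
proof -
  have I1: "(\<lambda>z. sin (PP k z) * sin z) integrable_on {0..2*pi}"
    by (intro integrable_continuous_real sPs_cont assms)
  have I2: "(\<lambda>z. (sin z)^2) integrable_on {0..2*pi}"
    by (intro integrable_continuous_real continuous_intros)
  have cd: "continuous_on {0..2*pi} (\<lambda>z. sin (PP k z) * sin z - (sin z)^2)"
    by (intro continuous_intros sPs_cont assms)
  have "\<bar>integral {0..2*pi} (\<lambda>z. sin (PP k z) * sin z - (sin z)^2)\<bar> \<le> 19 * k^2 * (2*pi - 0)"
  proof (rule int_abs_bound[OF cd])
    fix z assume z: "z \<in> {0..2*pi}"
    have "\<bar>sin (PP k z) * sin z - (sin z)^2\<bar> = \<bar>sin (PP k z) - sin z\<bar> * \<bar>sin z\<bar>"
      by (simp add: power2_eq_square abs_mult[symmetric] algebra_simps)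
    also have "\<dots> \<le> \<bar>PP k z - z\<bar> * 1" using sin_lip by (intro mult_mono) auto
    also have "\<dots> \<le> 19 * k^2" using PP_near[OF assms z] by simp
    finally show "\<bar>sin (PP k z) * sin z - (sin z)^2\<bar> \<le> 19 * k^2" .
  qed auto
  moreover have "integral {0..2*pi} (\<lambda>z. sin (PP k z) * sin z - (sin z)^2) = pi * hh k - pi"
    using integral_diff[OF I1 I2] int_sin2_full by (simp add: hh_def)
  ultimately have "\<bar>pi * (hh k - 1)\<bar> \<le> pi * (38 * k^2)" by (simp add: algebra_simps)
  then show ?thesis by (simp add: abs_mult)
qed

lemma hh_lip: assumes "k1^2 \<le> 1/2" "k2^2 \<le> 1/2" shows "\<bar>hh k1 - hh k2\<bar> \<le> 76 * \<bar>k1^2 - k2^2\<bar>"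
proof -
  have I1: "(\<lambda>z. sin (PP k1 z) * sin z) integrable_on {0..2*pi}"
    by (intro integrable_continuous_real sPs_cont assms)
  have I2: "(\<lambda>z. sin (PP k2 z) * sin z) integrable_on {0..2*pi}"
    by (intro integrable_continuous_real sPs_cont assms)
  have cd: "continuous_on {0..2*pi} (\<lambda>z. sin (PP k1 z) * sin z - sin (PP k2 z) * sin z)"
    by (intro continuous_intros sPs_cont assms)
  have "\<bar>integral {0..2*pi} (\<lambda>z. sin (PP k1 z) * sin z - sin (PP k2 z) * sin z)\<bar> \<le> 38 * \<bar>k1^2 - k2^2\<bar> * (2*pi - 0)"
  proof (rule int_abs_bound[OF cd])
    fix z assume z: "z \<in> {0..2*pi}"
    have "\<bar>sin (PP k1 z) * sin z - sin (PP k2 z) * sin z\<bar> = \<bar>sin (PP k1 z) - sin (PP k2 z)\<bar> * \<bar>sin z\<bar>"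
      by (simp add: abs_mult[symmetric] algebra_simps)
    also have "\<dots> \<le> \<bar>PP k1 z - PP k2 z\<bar> * 1" using sin_lip by (intro mult_mono) auto
    also have "\<dots> \<le> 38 * \<bar>k1^2 - k2^2\<bar>" using PP_lip[OF assms z] by simp
    finally show "\<bar>sin (PP k1 z) * sin z - sin (PP k2 z) * sin z\<bar> \<le> 38 * \<bar>k1^2 - k2^2\<bar>" .
  qed auto
  moreover have "integral {0..2*pi} (\<lambda>z. sin (PP k1 z) * sin z - sin (PP k2 z) * sin z) = pi * (hh k1 - hh k2)"
    using integral_diff[OF I1 I2] by (simp add: hh_def algebra_simps)
  ultimately have "\<bar>pi * (hh k1 - hh k2)\<bar> \<le> pi * (76 * \<bar>k1^2 - k2^2\<bar>)" by (simp add: algebra_simps)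
  then show ?thesis by (simp add: abs_mult)
qed

lemma UU_eq: assumes "-1 < E" shows "UU E z = sqrt (1 - E) * sin (PP (modk E) z)"
proof -
  have s: "sqrt (2/(1+E)) * sqrt ((1+E)/2) = 1"
    using assms by (simp add: real_sqrt_mult[symmetric])
  have "z / ell E * sqrt ((1 + E) / 2) = z * (2 * ellK (modk E) / pi) * (sqrt (2/(1+E)) * sqrt ((1+E)/2))"
    by (simp add: ell_def T0_def)
  also have "\<dots> = cc (modk E) * z" using s by (simp add: cc_def)
  finally show ?thesis by (simp add: UU_def u0_def jsn_def PP_def)
qed

lemma amp_eq: assumes "-1 < E" "(modk E)^2 \<le> 1/2" shows "amp E = sqrt (1 - E) * hh (modk E)"
proof -
  have I: "(\<lambda>z. sin (PP (modk E) z) * sin z) integrable_on {0..2 * pi}"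
    by (intro integrable_continuous_real sPs_cont assms)
  have "integral {0..2 * pi} (\<lambda>z. UU E z * sin z) = integral {0..2 * pi} (\<lambda>z. sqrt (1 - E) * (sin (PP (modk E) z) * sin z))"
    using UU_eq[OF assms(1)] by (simp add: mult.assoc)
  also have "\<dots> = sqrt (1 - E) * integral {0..2 * pi} (\<lambda>z. sin (PP (modk E) z) * sin z)"
    using integral_mult[OF I, of "sqrt (1 - E)"] by simp
  finally show ?thesis by (simp add: amp_def hh_def)
qed

lemma ell_eq: assumes "-1 < E" "(modk E)^2 \<le> 1/2" shows "(ell E)^2 = (1 + E) / (2 * (cc (modk E))^2)"
proof -
  define K where "K = ellK (modk E)"
  have K: "pi/2 \<le> K" using ellK_est(2)[OF assms(2)] K_def by simp
  then have K0: "K \<noteq> 0" using pi_gt_zero by linarith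
  have s2: "(sqrt (2/(1+E)))^2 = 2/(1+E)" using assms by simp
  have "(ell E)^2 = pi^2 / (4 * (sqrt (2/(1+E)))^2 * K^2)"
    by (simp add: ell_def T0_def K_def power_divide power_mult_distrib)
  also have "\<dots> = pi^2 * (1+E) / (8 * K^2)" unfolding s2 using assms K0 by (simp add: field_simps)
  also have "\<dots> = (1 + E) / (2 * (2 * K / pi)^2)" using K0 by (simp add: field_simps power2_eq_square)
  finally show ?thesis by (simp add: cc_def K_def)
qed

lemma ell_alg: fixes s e c :: real assumes s: "0 \<le> s" "s \<le> 1/1000" and e: "\<bar>e\<bar> \<le> 5 * s^2" and c: "c = 1 + s/8 + e"
  shows "\<bar>(1 - s/2) / c^2 - (1 - 3 * s/4)\<bar> \<le> 13 * s^2"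
proof -
  have "s * s \<le> s * (1/1000)" by (rule mult_left_mono) (use s in auto)
  then have s2: "s^2 \<le> s / 1000" by (simp add: power2_eq_square)
  have e1: "\<bar>e\<bar> \<le> 1/100" using e s2 s by linarith
  have c1: "c \<ge> 98/100" using c e1 s by linarith
  have c2: "c^2 \<ge> 24/25"
  proof -
    have "c^2 \<ge> (98/100)^2" using c1 by (intro power_mono) auto
    moreover have "(98/100::real)^2 \<ge> 24/25" by (simp add: power2_eq_square)
    ultimately show ?thesis by linarith
  qed
  define u where "u = 2 * e + e * s / 4 + e^2"
  have N: "(1 - s/2) - (1 - 3 * s/4) * c^2 = s^2 * (11/64 + 3 * s/256) - u * (1 - 3 * s/4)"
    unfolding c u_def by (simp add: algebra_simps power2_eq_square, simp add: field_simps)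
  have u1: "\<bar>u\<bar> \<le> \<bar>e\<bar> * (2 + s/4 + \<bar>e\<bar>)"
  proof -
    have "u = e * (2 + s/4 + e)" by (simp add: u_def algebra_simps power2_eq_square)
    then have "\<bar>u\<bar> = \<bar>e\<bar> * \<bar>2 + s/4 + e\<bar>" by (simp add: abs_mult)
    also have "\<dots> \<le> \<bar>e\<bar> * (2 + s/4 + \<bar>e\<bar>)" by (intro mult_left_mono) (use s in auto)
    finally show ?thesis .
  qed
  have u2: "\<bar>e\<bar> * (2 + s/4 + \<bar>e\<bar>) \<le> (5 * s^2) * (21/10)"
    by (rule mult_mono) (use e e1 s in auto)
  have t1: "\<bar>u * (1 - 3 * s/4)\<bar> \<le> \<bar>u\<bar>"
    by (simp add: abs_mult) (rule mult_left_le, use s in auto)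
  have t2: "\<bar>s^2 * (11/64 + 3 * s/256)\<bar> \<le> s^2 * 1"
  proof -
    have "s^2 * (11/64 + 3 * s/256) \<le> s^2 * 1" by (rule mult_left_mono) (use s in auto)
    moreover have "0 \<le> s^2 * (11/64 + 3 * s/256)" using s by simp
    ultimately show ?thesis by simp
  qed
  have x1: "5 * s^2 * (21/10) = (21/2) * s^2" "s^2 * 1 = s^2" by simp_all
  have x2: "12 * s^2 * (24/25) = (288/25) * s^2" by simp
  have NN: "\<bar>(1 - s/2) - (1 - 3 * s/4) * c^2\<bar> \<le> 12 * s^2 * (24/25)"
  proof -
    have "\<bar>(1 - s/2) - (1 - 3 * s/4) * c^2\<bar> \<le> \<bar>s^2 * (11/64 + 3 * s/256)\<bar> + \<bar>u * (1 - 3 * s/4)\<bar>"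
      unfolding N by (rule abs_triangle_ineq4)
    also have "\<dots> \<le> s^2 + (21/2) * s^2" using t1 t2 u1 u2 x1 by linarith
    also have "\<dots> \<le> 12 * s^2 * (24/25)" using zero_le_power2[of s] by linarith
    finally show ?thesis .
  qed
  have cpos: "0 < c^2" using c2 by linarith
  have "(1 - s/2) / c^2 - (1 - 3 * s/4) = ((1 - s/2) - (1 - 3 * s/4) * c^2) / c^2"
    using cpos by (simp add: field_simps)
  then have "\<bar>(1 - s/2) / c^2 - (1 - 3 * s/4)\<bar> = \<bar>(1 - s/2) - (1 - 3 * s/4) * c^2\<bar> / c^2"
    using cpos by simp
  also have "\<dots> \<le> (12 * s^2 * (24/25)) / (24/25)"
    by (rule frac_le) (use NN c2 in auto)
  also have "\<dots> \<le> 13 * s^2" by simp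
  finally show ?thesis .
qed

lemma region: fixes E :: real assumes "1 - 1/1280 \<le> E" "E < 1"
  shows "0 < sqrt (1 - E)" "(sqrt (1 - E))^2 = 1 - E" "(modk E)^2 = (1 - E) / (1 + E)"
    "(modk E)^2 \<le> (sqrt (1 - E))^2" "(sqrt (1 - E))^2 \<le> 1/1280" "(modk E)^2 \<le> 1/2" "-1 < E"
    "0 \<le> modk E"
proof -
  show "0 < sqrt (1 - E)" using assms by simp
  show A2: "(sqrt (1 - E))^2 = 1 - E" using assms by simp
  have "0 \<le> (1 - E) / (1 + E)" by (intro divide_nonneg_pos) (use assms in auto)
  then show k2: "(modk E)^2 = (1 - E) / (1 + E)" unfolding modk_def by (rule real_sqrt_pow2)
  have "(1 - E) / (1 + E) \<le> (1 - E) / 1" using assms by (intro divide_left_mono) auto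
  then show "(modk E)^2 \<le> (sqrt (1 - E))^2" using A2 k2 by simp
  then show "(sqrt (1 - E))^2 \<le> 1/1280" using A2 assms by simp
  show "(modk E)^2 \<le> 1/2" using \<open>(modk E)^2 \<le> (sqrt (1 - E))^2\<close> A2 assms by simp
  show "-1 < E" using assms by simp
  show "0 \<le> modk E" using \<open>0 \<le> (1 - E) / (1 + E)\<close> by (simp add: modk_def)
qed

lemma amp_basic: fixes E :: real assumes "1 - 1/1280 \<le> E" "E < 1"
  shows "\<bar>amp E - sqrt (1 - E)\<bar> \<le> 38 * (sqrt (1 - E))^3"
    "sqrt (1 - E) / 2 \<le> amp E" "amp E \<le> 2 * sqrt (1 - E)" "0 < amp E"
proof -
  define A where "A = sqrt (1 - E)"
  define k where "k = modk E"
  note r = region[OF assms, folded A_def k_def]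
  have a: "amp E = A * hh k" using amp_eq[OF r(7) r(6)[unfolded k_def]] by (simp add: A_def k_def)
  have h: "\<bar>hh k - 1\<bar> \<le> 38 * A^2" using hh_est[OF r(6)] r(4) by linarith
  have "amp E - A = A * (hh k - 1)" unfolding a by (simp add: algebra_simps)
  then have "\<bar>amp E - A\<bar> = A * \<bar>hh k - 1\<bar>" using r(1) by (simp add: abs_mult)
  also have "\<dots> \<le> A * (38 * A^2)" using h r(1) by (intro mult_left_mono) auto
  finally show "\<bar>amp E - sqrt (1 - E)\<bar> \<le> 38 * (sqrt (1 - E))^3" unfolding A_def[symmetric]
    by (simp add: power3_eq_cube power2_eq_square)
  have "38 * A^2 \<le> 1/2" using r(5) by simp
  then have hb: "1/2 \<le> hh k" "hh k \<le> 2" using h by linarith+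
  show "A / 2 \<le> amp E" unfolding A_def[symmetric] a using hb r(1) mult_left_mono[of "1/2" "hh k" A] by simp
  show "amp E \<le> 2 * A" unfolding A_def[symmetric] a using hb r(1) mult_left_mono[of "hh k" 2 A] by (simp add: mult.commute)
  show "0 < amp E" unfolding a using hb r(1) by simp
qed

lemma amp_mono: fixes E1 E2 :: real assumes "1 - 1/1280 \<le> E1" "E1 < E2" "E2 < 1"
  shows "amp E2 < amp E1" "amp E1 - amp E2 \<le> 2 * (sqrt (1 - E1) - sqrt (1 - E2))"
proof -
  have as2: "1 - 1/1280 \<le> E2" using assms by simp
  define A1 where "A1 = sqrt (1 - E1)"
  define A2 where "A2 = sqrt (1 - E2)"
  note r1 = region[OF assms(1) less_trans[OF assms(2,3)], folded A1_def]
  note r2 = region[OF as2 assms(3), folded A2_def]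
  have a1: "amp E1 = A1 * hh (modk E1)" using amp_eq[OF r1(7) r1(6)] by (simp add: A1_def)
  have a2: "amp E2 = A2 * hh (modk E2)" using amp_eq[OF r2(7) r2(6)] by (simp add: A2_def)
  have AA: "A2 < A1" unfolding A1_def A2_def using assms by simp
  have A1s: "A1^2 \<le> 1/1280" using r1(5) .
  have ediff: "E2 - E1 = (A1 - A2) * (A1 + A2)"
    using r1(2) r2(2) by (simp add: algebra_simps power2_eq_square)
  have D: "\<bar>(modk E1)^2 - (modk E2)^2\<bar> \<le> 2 * (E2 - E1)"
  proof -
    have "(modk E1)^2 - (modk E2)^2 = 2 * (E2 - E1) / ((1 + E1) * (1 + E2))"
      unfolding r1(3) r2(3) using r1(7) r2(7) by (simp add: field_simps)
    moreover have pp: "(1 + E1) * (1 + E2) \<ge> 1" using mult_mono[of 1 "1 + E1" 1 "1 + E2"] assms as2 by simp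
    ultimately have "\<bar>(modk E1)^2 - (modk E2)^2\<bar> = 2 * (E2 - E1) / ((1 + E1) * (1 + E2))"
      using assms by simp
    also have "\<dots> \<le> 2 * (E2 - E1) / 1"
      using pp assms by (intro divide_left_mono) auto
    finally show ?thesis by simp
  qed
  define h1 where "h1 = hh (modk E1)"
  define h2 where "h2 = hh (modk E2)"
  have hl: "\<bar>h1 - h2\<bar> \<le> 76 * (2 * ((A1 - A2) * (A1 + A2)))"
  proof -
    have "\<bar>h1 - h2\<bar> \<le> 76 * (2 * (E2 - E1))" unfolding h1_def h2_def
      using order_trans[OF hh_lip[OF r1(6) r2(6)] mult_left_mono[OF D, of 76]] by simp
    then show ?thesis unfolding ediff .
  qed
  have h1b: "\<bar>h1 - 1\<bar> \<le> 38 / 1280" using hh_est[OF r1(6)] r1(4) A1s unfolding h1_def by linarith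
  have P: "A2 * (A1 + A2) \<le> 2 / 1280"
  proof -
    have "A2 * (A1 + A2) \<le> A1 * (A1 + A1)" using AA r2(1) by (intro mult_mono) auto
    also have "\<dots> = 2 * A1^2" by (simp add: power2_eq_square)
    finally show ?thesis using A1s by simp
  qed
  have T: "\<bar>A2 * (h1 - h2)\<bar> \<le> (304/1280) * (A1 - A2)"
  proof -
    have "\<bar>A2 * (h1 - h2)\<bar> = A2 * \<bar>h1 - h2\<bar>" using r2(1) by (simp add: abs_mult)
    also have "\<dots> \<le> A2 * (76 * (2 * ((A1 - A2) * (A1 + A2))))" using hl r2(1) by (intro mult_left_mono) auto
    also have "\<dots> = 152 * (A1 - A2) * (A2 * (A1 + A2))" by (simp add: algebra_simps)
    also have "\<dots> \<le> 152 * (A1 - A2) * (2 / 1280)" using P AA by (intro mult_left_mono) auto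
    finally show ?thesis by simp
  qed
  have e: "amp E1 - amp E2 = (A1 - A2) * h1 + A2 * (h1 - h2)"
    unfolding a1 a2 h1_def h2_def by (simp add: algebra_simps)
  have h1l: "1 - 38/1280 \<le> h1" "h1 \<le> 1 + 38/1280" using h1b unfolding abs_le_iff by linarith+
  have L: "(A1 - A2) * (1 - 38/1280) \<le> (A1 - A2) * h1" using h1l AA by (intro mult_left_mono) auto
  have U: "(A1 - A2) * h1 \<le> (A1 - A2) * (1 + 38/1280)" using h1l AA by (intro mult_left_mono) auto
  have "0 < (A1 - A2) * (1 - 38/1280) - (304/1280) * (A1 - A2)" using AA by simp
  then show "amp E2 < amp E1" using e L T by linarith
  have "(A1 - A2) * (1 + 38/1280) + (304/1280) * (A1 - A2) \<le> 2 * (A1 - A2)" using AA by (simp add: field_simps)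
  then show "amp E1 - amp E2 \<le> 2 * (sqrt (1 - E1) - sqrt (1 - E2))"
    using e U T unfolding A1_def[symmetric] A2_def[symmetric] by linarith
qed

lemma main_est: fixes E :: real assumes "1 - 1/1280 \<le> E" "E < 1"
  shows "\<bar>E - (1 - (amp E)^2)\<bar> \<le> 3000 * (amp E)^4"
    "\<bar>(ell E)^2 - (1 - 3 / 4 * (amp E)^2)\<bar> \<le> 3000 * (amp E)^4"
    "H2norm (\<lambda>z. UU E z - amp E * sin z) \<le> 3000 * (amp E)^3"
proof -
  define A where "A = sqrt (1 - E)"
  define k where "k = modk E"
  define a where "a = amp E"
  note r = region[OF assms, folded A_def k_def]
  note ab = amp_basic[OF assms, folded A_def a_def]
  have A0: "0 \<le> A" using r(1) by simp
  have A4: "A^4 \<le> 16 * a^4"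
  proof -
    have "A^4 \<le> (2 * a)^4" using ab A0 by (intro power_mono) auto
    then show ?thesis by (simp add: power_mult_distrib)
  qed
  have a4pos: "0 \<le> a^4" by simp
  have A3: "A^3 \<le> 8 * a^3"
  proof -
    have "A^3 \<le> (2 * a)^3" using ab A0 by (intro power_mono) auto
    then show ?thesis by (simp add: power_mult_distrib)
  qed
  have sq: "\<bar>a^2 - A^2\<bar> \<le> 114 * A^4"
  proof -
    have "a^2 - A^2 = (a - A) * (a + A)" by (simp add: algebra_simps power2_eq_square)
    then have "\<bar>a^2 - A^2\<bar> = \<bar>a - A\<bar> * (a + A)" using ab A0 by (simp add: abs_mult)
    also have "\<dots> \<le> (38 * A^3) * (3 * A)" using ab A0 by (intro mult_mono) auto
    also have "\<dots> = 114 * A^4" by (simp add: power_numeral_reduce)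
    finally show ?thesis .
  qed
  show "\<bar>E - (1 - (amp E)^2)\<bar> \<le> 3000 * (amp E)^4"
  proof -
    have "E - (1 - a^2) = a^2 - A^2" using r(2) by simp
    then have "\<bar>E - (1 - a^2)\<bar> \<le> 114 * (16 * a^4)" using sq A4 by simp
    then show ?thesis unfolding a_def by simp
  qed
  define s where "s = A^2"
  have s0: "0 \<le> s" "s \<le> 1/1000" using r(5) by (auto simp: s_def)
  have k2: "k^2 = s / (2 - s)" using r(3) r(2) by (simp add: s_def)
  have ks: "k^2 \<le> s" using r(4) by (simp add: s_def)
  define c where "c = cc k"
  have ce: "\<bar>c - 1 - k^2/4\<bar> \<le> 4 * k^4" using cc_est(4)[OF r(6)] by (simp add: c_def)
  have k4: "k^4 \<le> s^2"
  proof -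
    have "(k^2)^2 \<le> s^2" using ks by (intro power_mono) auto
    then show ?thesis by (simp add: power_mult[symmetric])
  qed
  have kd: "0 \<le> k^2 - s/2" "k^2 - s/2 \<le> s^2 / 2"
  proof -
    have "k^2 - s/2 = s^2 / (2 * (2 - s))" unfolding k2 using s0 by (simp add: field_simps power2_eq_square)
    moreover have "s^2 / (2 * (2 - s)) \<le> s^2 / (2 * 1)" using s0 by (intro divide_left_mono) auto
    moreover have "0 \<le> s^2 / (2 * (2 - s))" using s0 by simp
    ultimately show "0 \<le> k^2 - s/2" "k^2 - s/2 \<le> s^2 / 2" by simp_all
  qed
  define e where "e = c - 1 - s/8"
  have e5: "\<bar>e\<bar> \<le> 5 * s^2" unfolding e_def using ce k4 kd unfolding abs_le_iff by linarith
  have ell2: "(ell E)^2 = (1 - s/2) / c^2"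
    using ell_eq[OF r(7) r(6)[unfolded k_def]] r(2) unfolding c_def k_def s_def
    by (simp add: field_simps)
  have EA: "\<bar>(ell E)^2 - (1 - 3 * s/4)\<bar> \<le> 13 * s^2"
    unfolding ell2 by (rule ell_alg[OF s0 e5]) (simp add: e_def)
  show "\<bar>(ell E)^2 - (1 - 3 / 4 * (amp E)^2)\<bar> \<le> 3000 * (amp E)^4"
  proof -
    have ss: "s^2 = A^4" by (simp add: s_def power_mult[symmetric])
    have "\<bar>(ell E)^2 - (1 - 3 / 4 * a^2)\<bar> \<le> \<bar>(ell E)^2 - (1 - 3 * s/4)\<bar> + 3/4 * \<bar>a^2 - A^2\<bar>"
    proof -
      have eqn: "(ell E)^2 - (1 - 3 / 4 * a^2) = ((ell E)^2 - (1 - 3 * s/4)) + 3/4 * (a^2 - A^2)"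
        by (simp add: s_def algebra_simps)
      have "\<bar>3/4 * (a^2 - A^2)\<bar> = 3/4 * \<bar>a^2 - A^2\<bar>" by (rule abs_scale) auto
      then show ?thesis unfolding eqn using abs_triangle_ineq[of "(ell E)^2 - (1 - 3 * s/4)" "3/4 * (a^2 - A^2)"]
        by linarith
    qed
    moreover have "\<bar>(ell E)^2 - (1 - 3 * s/4)\<bar> \<le> 13 * A^4" using EA ss by simp
    moreover have "3/4 * \<bar>a^2 - A^2\<bar> \<le> 3/4 * (114 * A^4)" using sq by (intro mult_left_mono) auto
    moreover have "3/4 * (114 * A^4) = (171/2) * A^4" by simp
    ultimately have "\<bar>(ell E)^2 - (1 - 3 / 4 * a^2)\<bar> \<le> 13 * A^4 + (171/2) * A^4" by linarith
    also have "\<dots> \<le> 99 * (16 * a^4)" using A4 a4pos by linarith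
    finally show ?thesis unfolding a_def by simp
  qed
  have f: "(\<lambda>z. UU E z - amp E * sin z) = VV A a k"
    by (rule ext) (simp add: UU_eq[OF r(7)] VV_def A_def a_def k_def)
  have H: "H2norm (\<lambda>z. UU E z - amp E * sin z) =
      sqrt (integral {0..2*pi} (\<lambda>z. (VV A a k z)^2 + (VV1 A a k z)^2 + (VV2 A a k z)^2))"
    unfolding f H2norm_def VV_derivs[OF r(6)] by simp
  define M where "M = 83 * A^3"
  have Ak: "A * k^2 \<le> A^3" using mult_left_mono[OF ks A0] by (simp add: s_def power3_eq_cube power2_eq_square)
  have aA: "\<bar>a - A\<bar> \<le> 38 * A^3" using ab by simp
  have pb: "(VV A a k z)^2 + (VV1 A a k z)^2 + (VV2 A a k z)^2 \<le> 3 * M^2" if z: "z \<in> {0..2*pi}" for z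
  proof -
    have b1: "\<bar>VV A a k z\<bar> \<le> M" using VV_bound[OF r(6) A0 z, of a] Ak aA unfolding M_def by linarith
    have b2: "\<bar>VV1 A a k z\<bar> \<le> M" using VV1_bound[OF r(6) A0 z, of a] Ak aA unfolding M_def by linarith
    have b3: "\<bar>VV2 A a k z\<bar> \<le> M" using VV2_bound[OF r(6) A0 z, of a] Ak aA unfolding M_def by linarith
    have "\<bar>VV A a k z\<bar>^2 \<le> M^2" "\<bar>VV1 A a k z\<bar>^2 \<le> M^2" "\<bar>VV2 A a k z\<bar>^2 \<le> M^2"
      using power_mono[OF b1 abs_ge_zero, of 2] power_mono[OF b2 abs_ge_zero, of 2] power_mono[OF b3 abs_ge_zero, of 2] by auto
    then show ?thesis by simp
  qed
  have ci: "continuous_on {0..2*pi} (\<lambda>z. (VV A a k z)^2 + (VV1 A a k z)^2 + (VV2 A a k z)^2)"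
    by (intro continuous_intros VV_cont[OF r(6)] VV2_cont[OF r(6)])
  have "\<bar>integral {0..2*pi} (\<lambda>z. (VV A a k z)^2 + (VV1 A a k z)^2 + (VV2 A a k z)^2)\<bar> \<le> 3 * M^2 * (2*pi - 0)"
    by (rule int_abs_bound[OF ci]) (use pb in auto)
  also have "\<dots> \<le> (361 * A^3)^2"
  proof -
    have "3 * M^2 * (2*pi - 0) = (A^3)^2 * (41334 * pi)" by (simp add: M_def power_mult_distrib)
    also have "\<dots> \<le> (A^3)^2 * 130321" using pi_approx(2) by (intro mult_left_mono) auto
    finally show ?thesis by (simp add: power_mult_distrib)
  qed
  finally have "sqrt (integral {0..2*pi} (\<lambda>z. (VV A a k z)^2 + (VV1 A a k z)^2 + (VV2 A a k z)^2)) \<le> sqrt ((361 * A^3)^2)"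
    by (intro real_sqrt_le_mono) linarith
  also have "\<dots> = 361 * A^3" using A0 by (subst real_sqrt_abs) simp
  also have "\<dots> \<le> 361 * (8 * a^3)" using A3 by simp
  finally have "H2norm (\<lambda>z. UU E z - amp E * sin z) \<le> 361 * (8 * a^3)" unfolding H .
  moreover have "361 * (8 * a^3) \<le> 3000 * a^3" using ab by simp
  ultimately show "H2norm (\<lambda>z. UU E z - amp E * sin z) \<le> 3000 * (amp E)^3"
    unfolding a_def by linarith
qed

lemma cont_transfer: fixes f g :: "real \<Rightarrow> real"
  assumes g: "continuous_on S g" and b: "\<And>x y. x \<in> S \<Longrightarrow> y \<in> S \<Longrightarrow> \<bar>f x - f y\<bar> \<le> 2 * \<bar>g x - g y\<bar>"
  shows "continuous_on S f"
  unfolding continuous_on_iff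
proof (intro ballI allI impI)
  fix x e :: real assume x: "x \<in> S" and e: "0 < e"
  obtain d where d: "d > 0" "\<forall>x'\<in>S. dist x' x < d \<longrightarrow> dist (g x') (g x) < e/2"
    using g x e unfolding continuous_on_iff by (metis half_gt_zero)
  show "\<exists>d>0. \<forall>x'\<in>S. dist x' x < d \<longrightarrow> dist (f x') (f x) < e"
  proof (intro exI[of _ d] conjI ballI impI)
    fix x' assume x': "x' \<in> S" "dist x' x < d"
    have "\<bar>g x' - g x\<bar> < e/2" using d x' by (simp add: dist_real_def)
    then show "dist (f x') (f x) < e" using b[OF x'(1) x] by (simp add: dist_real_def)
  qed (use d in auto)
qed

lemma amp_lip: fixes x y :: real assumes "1 - 1/1280 \<le> x" "x < 1" "1 - 1/1280 \<le> y" "y < 1"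
  shows "\<bar>amp x - amp y\<bar> \<le> 2 * \<bar>sqrt (1 - x) - sqrt (1 - y)\<bar>"
proof (cases x y rule: linorder_cases)
  case less
  then show ?thesis using amp_mono[OF assms(1) less assms(4)] by simp
next
  case equal then show ?thesis by simp
next
  case greater
  then show ?thesis using amp_mono[OF assms(3) greater assms(2)] by simp
qed

lemma amp_cont: fixes b :: real assumes "b < 1" shows "continuous_on {1 - 1/1280..b} amp"
proof (rule cont_transfer[of _ "\<lambda>x. sqrt (1 - x)"])
  show "continuous_on {1 - 1/1280..b} (\<lambda>x. sqrt (1 - x))" by (intro continuous_intros)
  fix x y assume "x \<in> {1 - 1/1280..b}" "y \<in> {1 - 1/1280..b}"
  then show "\<bar>amp x - amp y\<bar> \<le> 2 * \<bar>sqrt (1 - x) - sqrt (1 - y)\<bar>" using assms by (intro amp_lip) auto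
qed

lemma amp_bij: "bij_betw amp {1 - 1/1280<..<1} {0<..<amp (1 - 1/1280)}"
proof -
  define d :: real where "d = 1/1280"
  define a0 where "a0 = amp (1 - d)"
  have d0: "0 < d" "d < 1" by (auto simp: d_def)
  have inj: "inj_on amp {1 - d<..<1}"
  proof (rule inj_onI)
    fix x y assume x: "x \<in> {1 - d<..<1}" and y: "y \<in> {1 - d<..<1}" and eq: "amp x = amp y"
    show "x = y"
    proof (rule ccontr)
      assume "x \<noteq> y"
      then consider "x < y" | "y < x" by linarith
      then show False
      proof cases
        case 1 then show False using amp_mono(1)[of x y] x y eq by (auto simp: d_def)
      next
        case 2 then show False using amp_mono(1)[of y x] x y eq by (auto simp: d_def)
      qed
    qed
  qed
  have sub: "amp ` {1 - d<..<1} \<subseteq> {0<..<a0}"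
  proof
    fix v assume "v \<in> amp ` {1 - d<..<1}"
    then obtain x where x: "x \<in> {1 - d<..<1}" "v = amp x" by blast
    have "0 < amp x" using amp_basic(4)[of x] x by (auto simp: d_def)
    moreover have "amp x < a0" using amp_mono(1)[of "1 - d" x] x by (auto simp: d_def a0_def)
    ultimately show "v \<in> {0<..<a0}" using x by simp
  qed
  have sup: "{0<..<a0} \<subseteq> amp ` {1 - d<..<1}"
  proof
    fix y assume y: "y \<in> {0<..<a0}"
    have a0b: "a0 \<le> 2 * sqrt d" using amp_basic(3)[of "1 - d"] by (simp add: a0_def d_def)
    define b where "b = 1 - (y/4)^2"
    have b1: "b < 1" using y by (simp add: b_def)
    have "y/4 < sqrt d / 2" using y a0b by simp
    then have "(y/4)^2 < (sqrt d / 2)^2" using y by (intro power_strict_mono) auto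
    then have "(y/4)^2 < d / 4" using d0 by (simp add: power_divide)
    then have b2: "1 - d < b" using d0 by (simp add: b_def)
    have "amp b \<le> 2 * sqrt (1 - b)" using amp_basic(3)[of b] b1 b2 by (simp add: d_def)
    also have "sqrt (1 - b) = y/4" using y by (simp add: b_def)
    finally have ab: "amp b < y" using y by simp
    have "continuous_on {1 - d..b} amp" using amp_cont[OF b1] by (simp add: d_def)
    then obtain x where x: "1 - d \<le> x" "x \<le> b" "amp x = y"
      using IVT2'[of amp b y "1 - d"] ab y b2 by (auto simp: a0_def)
    have "x \<noteq> 1 - d" using x y by (auto simp: a0_def)
    then have "x \<in> {1 - d<..<1}" using x b1 by auto
    then show "y \<in> amp ` {1 - d<..<1}" using x by auto
  qed
  show ?thesis unfolding bij_betw_def using inj sub sup by (auto simp: d_def a0_def)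
qed

theorem proposition2p1:
  shows "\<exists>\<delta> a0 C. 0 < \<delta> \<and> \<delta> < 1 \<and> 0 < a0 \<and> 0 < C \<and>
    bij_betw amp {1 - \<delta><..<1} {0<..<a0} \<and>
    (\<forall>E\<in>{1 - \<delta><..<1}.
        \<bar>E - (1 - (amp E)\<^sup>2)\<bar> \<le> C * (amp E) ^ 4 \<and>
        \<bar>(ell E)\<^sup>2 - (1 - 3 / 4 * (amp E)\<^sup>2)\<bar> \<le> C * (amp E) ^ 4 \<and>
        H2norm (\<lambda>z. UU E z - amp E * sin z) \<le> C * (amp E) ^ 3)"
proof (rule exI[of _ "1/1280"], rule exI[of _ "amp (1 - 1/1280)"], rule exI[of _ "3000"], intro conjI ballI)
  show "0 < amp (1 - 1/1280)" using amp_basic(4)[of "1 - 1/1280"] by simp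
  show "bij_betw amp {1 - 1/1280<..<1} {0<..<amp (1 - 1/1280)}" by (rule amp_bij)
  fix E :: real assume "E \<in> {1 - 1/1280<..<1}"
  then have E: "1 - 1/1280 \<le> E" "E < 1" by auto
  show "\<bar>E - (1 - (amp E)\<^sup>2)\<bar> \<le> 3000 * (amp E) ^ 4" by (rule main_est(1)[OF E])
  show "\<bar>(ell E)\<^sup>2 - (1 - 3 / 4 * (amp E)\<^sup>2)\<bar> \<le> 3000 * (amp E) ^ 4" by (rule main_est(2)[OF E])
  show "H2norm (\<lambda>z. UU E z - amp E * sin z) \<le> 3000 * (amp E) ^ 3" by (rule main_est(3)[OF E])
qed simp_all

end
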